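(* Assume the setting below, let $\lambda>0$ with $\mu_+(\max\{\lambda,1\})\le1$, assume (A1), (A2), (A4), (A5), (A6), (A7), and (A8) with $\beta=0$. If $r$ is a cavitating equilibrium solution with $r(1)=\lambda$, then $$\lim_{\rho\to0^+}r'(\rho)\tau(\rho)^{n-1}=\varpi,$$ where $\varpi>0$ is the (unique) point with $h'(\varpi)=0$.
   Context: Setting: $n\ge2$; $\kappa$ continuous on $[0,\infty)$, $\mu_+(\lambda)=\int_0^\lambda s\max\{\kappa(s),0\}ds$; $f$ solves $f''+\kappa f=0$, $f(0)=0$, $f'(0)=1$. $\Phi(v_1,\dots,v_n)=\sum_i\phi(v_i)+h(v_1\cdots v_n)$, $\tau(\rho)=f(r(\rho))/f(\rho)$, $T(\rho)=\tau^{n-1}\big[\phi'(r')+h'(r'\tau^{n-1})\tau^{n-1}\big]$ (radial Cauchy stress). An equilibrium solution with $r(1)=\lambda$ is $r\in C^1(0,1]$, twice differentiable on $(0,1)$, $r'>0$ on $(0,1]$, $r(0):=\lim_{\rho\to0^+}r(\rho)\ge0$, $r(1)=\lambda$, satisfying on $(0,1)$ $$f(\rho)\big[\phi''(r')+h''(r'\tau^{n-1})\tau^{2(n-1)}\big]r''=(n-1)\big[f'(r)\phi'(\tau)-f'(\rho)\phi'(r')\big]-(n-1)\big(f'(r)r'-f'(\rho)\tau\big)h''(r'\tau^{n-1})\,r'\tau^{2n-3};$$ it is cavitating if $r(0)>0$ and $\lim_{\rho\to0^+}T(\rho)=0$. (A1) $h$ is $C^2$, strictly convex. (A2) $\lim_{v\to0^+}h(v)=\lim_{v\to\infty}h(v)/v=+\infty$.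 (A4) $\phi:(0,\infty)\to(0,\infty)$ $C^2$, convex. (A5) $v\phi'(v)$ increasing. (A6) there is $t_0\ge0$ with $\phi'(t_0)=0$; $q_1(s)=\sup_{v>t_0}\phi'(v)/\phi'(sv)$ ($s\ge1$), $q_0(s)=\inf_{v>t_0/s}\phi'(v)/\phi'(sv)$ ($s\in(0,1]$) satisfy $q_1\in C^1[1,\infty)$, $q_0\in C^1(0,1]$, $q_1(s)\to0$ ($s\to\infty$), $q_0(s)\to\infty$ ($s\to0^+$), $q_1'<0$, $q_0'<0$. (A7) there are $\delta_0,\delta_1>0$ with $|\phi'(sv)|\le\delta_1\phi(v)/v$ for all $v>0$ whenever $|s-1|<\delta_0$. (A8) $\phi(v)\le\delta_2(1+v^\alpha+v^{-\beta})$ for all $v>0$, $\delta_2>0$, $0<\alpha<n$, $0\le\beta<1+1/(n-1)$. *)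

theory Defs
  imports "HOL-Analysis.Analysis"
begin

definition mu_plus :: "(real \<Rightarrow> real) \<Rightarrow> real \<Rightarrow> real" where
  "mu_plus \<kappa> L = integral {0..L} (\<lambda>s. s * max (\<kappa> s) 0)"

definition strictly_convex_on :: "real set \<Rightarrow> (real \<Rightarrow> real) \<Rightarrow> bool" where
  "strictly_convex_on S g \<longleftrightarrow>
     (\<forall>x\<in>S. \<forall>y\<in>S. \<forall>u. x \<noteq> y \<and> 0 < u \<and> u < 1 \<longrightarrow>
        g (u * x + (1 - u) * y) < u * g x + (1 - u) * g y)"

definition C2_on :: "real set \<Rightarrow> (real \<Rightarrow> real) \<Rightarrow> bool" where
  "C2_on S g \<longleftrightarrow> (\<forall>x\<in>S. g differentiable (at x)) \<and>
     (\<forall>x\<in>S. deriv g differentiable (at x)) \<and> continuous_on S (deriv (deriv g))"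

definition tau :: "(real \<Rightarrow> real) \<Rightarrow> (real \<Rightarrow> real) \<Rightarrow> real \<Rightarrow> real" where
  "tau f r \<rho> = f (r \<rho>) / f \<rho>"

text \<open>Radial Cauchy stress T(rho); rd is r'.\<close>
definition cauchy_T :: "nat \<Rightarrow> (real \<Rightarrow> real) \<Rightarrow> (real \<Rightarrow> real) \<Rightarrow> (real \<Rightarrow> real)
    \<Rightarrow> (real \<Rightarrow> real) \<Rightarrow> (real \<Rightarrow> real) \<Rightarrow> real \<Rightarrow> real" where
  "cauchy_T n \<phi> h f r rd \<rho> =
     tau f r \<rho> ^ (n - 1) * (deriv \<phi> (rd \<rho>)
       + deriv h (rd \<rho> * tau f r \<rho> ^ (n - 1)) * tau f r \<rho> ^ (n - 1))"

end

theory Submission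
  imports Defs
begin

lemma tangent0:
  fixes g :: "real \<Rightarrow> real"
  assumes "convex_on {0<..} g" "x > 0" "y > 0" "g differentiable (at x)"
  shows "g y - g x \<ge> deriv g x * (y - x)"
proof -
  have d: "(g has_field_derivative deriv g x) (at x within {0<..})"
    using assms(4) DERIV_deriv_iff_real_differentiable has_field_derivative_at_within by blast
  show ?thesis
    by (rule convex_on_imp_above_tangent[OF assms(1) _ _ _ d])
       (use assms in \<open>auto simp: convex_connected interior_open\<close>)
qed

lemma scD:
  assumes "strictly_convex_on S g" "x \<in> S" "y \<in> S" "x \<noteq> y" "0 < u" "u < 1"
  shows "g (u * x + (1 - u) * y) < u * g x + (1 - u) * g y"
  using assms unfolding strictly_convex_on_def by blast

lemma strict_to_convex:
  assumes "strictly_convex_on {0<..} g" shows "convex_on {0<..} g"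
proof (rule convex_onI)
  fix t x y :: real assume t: "t > 0" "t < 1" and xy: "x \<in> {0<..}" "y \<in> {0<..}"
  show "g ((1 - t) *\<^sub>R x + t *\<^sub>R y) \<le> (1 - t) * g x + t * g y"
  proof (cases "x = y")
    case True then show ?thesis by (simp add: algebra_simps)
  next
    case False
    have "g ((1-t) * x + (1 - (1-t)) * y) < (1-t) * g x + (1 - (1-t)) * g y"
      using assms False t xy by (intro scD) auto
    then show ?thesis by simp
  qed
qed (simp add: convex_real_interval)

lemma strict_deriv_mono:
  fixes g :: "real \<Rightarrow> real"
  assumes sc: "strictly_convex_on {0<..} g" and x: "0 < x" and xy: "x < y"
    and dx: "g differentiable (at x)" and dy: "g differentiable (at y)"
  shows "deriv g x < deriv g y"
proof -
  have c: "convex_on {0<..} g" using strict_to_convex[OF sc] .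
  define m where "m = (x + y) / 2"
  have m: "x < m" "m < y" using xy by (auto simp: m_def)
  have "g ((1/2) * x + (1 - 1/2) * y) < (1/2) * g x + (1 - 1/2) * g y"
    using sc x xy by (intro scD) auto
  moreover have "(1/2) * x + (1 - 1/2) * y = m" by (simp add: m_def)
  ultimately have gm: "g m < (g x + g y)/2" by simp
  have t1: "g m - g x \<ge> deriv g x * (m - x)" using tangent0[OF c x _ dx, of m] m x by auto
  have t2: "g m - g y \<ge> deriv g y * (m - y)" using tangent0[OF c _ _ dy, of m] m x by auto
  have "m - x = (y - x)/2" "m - y = -(y-x)/2" by (auto simp: m_def)
  have e1: "deriv g x * (m - x) = deriv g x * (y-x) / 2" "deriv g y * (m - y) = - (deriv g y * (y-x)/2)"
    by (simp_all add: m_def field_simps)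
  have a: "deriv g x * (y-x) / 2 \<le> g m - g x" "g y - g m \<le> deriv g y * (y-x) / 2"
    using t1 t2 e1 by linarith+
  from a gm have "deriv g x * (y-x) / 2 < deriv g y * (y - x) / 2" by (simp add: field_simps)
  hence "deriv g x * (y-x) < deriv g y * (y - x)" by simp
  then show ?thesis using xy by simp
qed

lemma phi_deriv_nonneg:
  fixes \<phi> :: "real \<Rightarrow> real"
  assumes pos: "\<And>v. v > 0 \<Longrightarrow> \<phi> v > 0"
    and diff: "\<And>v. v > 0 \<Longrightarrow> \<phi> differentiable (at v)"
    and conv: "convex_on {0<..} \<phi>"
    and A5: "strict_mono_on {0<..} (\<lambda>v. v * deriv \<phi> v)"
    and A8: "\<exists>\<delta>2>0. \<exists>\<alpha>. 0 < \<alpha> \<and> \<alpha> < real n \<and>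
               (\<forall>v>0. \<phi> v \<le> \<delta>2 * (1 + v powr \<alpha> + v powr 0))"
    and x0: "x0 > 0"
  shows "deriv \<phi> x0 \<ge> 0"
proof (rule ccontr)
  assume neg: "\<not> deriv \<phi> x0 \<ge> 0"
  define c where "c = - (x0 * deriv \<phi> x0)"
  have c: "c > 0" using neg x0 by (simp add: c_def mult_pos_neg)
  obtain \<delta>2 \<alpha> where d2: "\<delta>2 > 0" "\<alpha> > 0" and bnd: "\<And>v. v > 0 \<Longrightarrow> \<phi> v \<le> \<delta>2 * (1 + v powr \<alpha> + v powr 0)"
    using A8 by blast
  have bnd1: "\<phi> v \<le> 3 * \<delta>2" if "0 < v" "v \<le> 1" for v
  proof -
    have "v powr \<alpha> \<le> 1" using that d2 by (simp add: powr_le1)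
    then have "\<delta>2 * (2 + v powr \<alpha>) \<le> \<delta>2 * 3" using d2 by (intro mult_left_mono) auto
    moreover have "v powr 0 = 1" using that by simp
    ultimately show ?thesis using bnd[OF that(1)] by (simp add: mult.commute)
  qed
  have step: "\<phi> (x/2) \<ge> \<phi> x + c/2" if "0 < x" "x \<le> x0" for x
  proof -
    have "x * deriv \<phi> x \<le> x0 * deriv \<phi> x0"
    proof (cases "x = x0")
      case False
      then have "x < x0" using that by simp
      then show ?thesis using strict_mono_onD[OF A5, of x x0] that x0 by simp
    qed simp
    moreover have "\<phi> (x/2) - \<phi> x \<ge> deriv \<phi> x * (x/2 - x)"
      using tangent0[OF conv that(1) _ diff[OF that(1)], of "x/2"] that by simp
    moreover have "deriv \<phi> x * (x/2 - x) = - (x * deriv \<phi> x) / 2" by (simp add: field_simps)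
    ultimately show ?thesis unfolding c_def by (simp add: field_simps)
  qed
  have ind: "\<phi> (x0 / 2^k) \<ge> \<phi> x0 + real k * c / 2" for k :: nat
  proof (induction k)
    case 0 then show ?case by simp
  next
    case (Suc k)
    have "x0 / 2^k \<le> x0" using x0 by (simp add: divide_le_eq)
    then have "\<phi> (x0/2^k/2) \<ge> \<phi> (x0/2^k) + c/2" using step[of "x0/2^k"] x0 by simp
    then show ?case using Suc by (simp add: field_simps)
  qed
  define k :: nat where "k = nat \<lceil>6 * \<delta>2 / c + x0\<rceil> + 1"
  have q: "6 * \<delta>2 / c \<ge> 0" using c d2 by simp
  have "real k \<ge> of_int \<lceil>6 * \<delta>2 / c + x0\<rceil> + 1" unfolding k_def by linarith
  moreover have "of_int \<lceil>6 * \<delta>2 / c + x0\<rceil> \<ge> 6 * \<delta>2 / c + x0" by (rule le_of_int_ceiling)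
  ultimately have k1: "real k > 6 * \<delta>2 / c" "real k > x0" using q x0 by linarith+
  have "k < 2^k" by (rule less_exp)
  then have "real k < real (2^k)" by (simp only: of_nat_less_iff)
  then have "real k < 2^k" by simp
  then have "x0 \<le> 2^k" using k1 by linarith
  then have "x0 / 2^k \<le> 1" by (simp add: divide_le_eq)
  then have "\<phi> (x0 / 2^k) \<le> 3 * \<delta>2" using bnd1 x0 by simp
  moreover have "real k * c / 2 > 3 * \<delta>2" using k1 c by (simp add: field_simps)
  moreover have "\<phi> x0 > 0" using pos x0 .
  ultimately show False using ind[of k] by linarith
qed

lemma phi_deriv_upper:
  fixes \<phi> :: "real \<Rightarrow> real"
  assumes pos: "\<And>v. v > 0 \<Longrightarrow> \<phi> v > 0"
    and diff: "\<And>v. v > 0 \<Longrightarrow> \<phi> differentiable (at v)"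
    and conv: "convex_on {0<..} \<phi>"
    and x: "0 < x" "x \<le> 1/2"
  shows "deriv \<phi> x \<le> 2 * \<phi> 1"
proof (cases "deriv \<phi> x \<le> 0")
  case True then show ?thesis using pos[of 1] by simp
next
  case False
  have "\<phi> 1 - \<phi> x \<ge> deriv \<phi> x * (1 - x)"
    using tangent0[OF conv x(1) _ diff[OF x(1)], of 1] by simp
  moreover have "deriv \<phi> x * (1/2) \<le> deriv \<phi> x * (1 - x)" using False x by (intro mult_left_mono) auto
  moreover have "\<phi> x > 0" using pos x by simp
  ultimately show ?thesis by simp
qed

lemma within_to_at:
  fixes g :: "real \<Rightarrow> real"
  assumes "(g has_real_derivative D) (at x within S)" "x \<in> interior S"
  shows "(g has_real_derivative D) (at x)"
proof -
  have "at x within S = at x" by (rule at_within_interior[OF assms(2)])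
  then show ?thesis using assms(1) by (simp only:)
qed

lemma deriv_cont_on:
  fixes g gd :: "real \<Rightarrow> real"
  assumes "\<And>x. x \<in> S \<Longrightarrow> (g has_real_derivative gd x) (at x within S)"
  shows "continuous_on S g"
  unfolding continuous_on_eq_continuous_within using assms DERIV_continuous by blast

lemma mono_deriv:
  fixes g :: "real \<Rightarrow> real"
  assumes "a \<le> b" "continuous_on {a..b} g"
    "\<And>x. a < x \<Longrightarrow> x < b \<Longrightarrow> (g has_real_derivative gd x) (at x)"
    "\<And>x. a < x \<Longrightarrow> x < b \<Longrightarrow> gd x \<ge> 0"
  shows "g a \<le> g b"
proof (rule DERIV_nonneg_imp_increasing_open[OF assms(1) _ assms(2)])
  fix x assume "a < x" "x < b"
  then show "\<exists>y. (g has_real_derivative y) (at x) \<and> 0 \<le> y" using assms(3,4) by blast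
qed
lemma mu_facts:
  fixes \<kappa> :: "real \<Rightarrow> real"
  assumes kc: "continuous_on {0..} \<kappa>"
  shows "mu_plus \<kappa> 0 = 0"
    and "\<And>x. x > 0 \<Longrightarrow> (mu_plus \<kappa> has_real_derivative x * max (\<kappa> x) 0) (at x)"
    and "\<And>b. continuous_on {0..b} (mu_plus \<kappa>)"
    and "\<And>x y. 0 \<le> x \<Longrightarrow> x \<le> y \<Longrightarrow> mu_plus \<kappa> x \<le> mu_plus \<kappa> y"
proof -
  have gc: "continuous_on {0..b} (\<lambda>s. s * max (\<kappa> s) 0)" for b
    by (intro continuous_intros continuous_on_subset[OF kc]) auto
  show "mu_plus \<kappa> 0 = 0" unfolding mu_plus_def
    by simp
  show d: "(mu_plus \<kappa> has_real_derivative x * max (\<kappa> x) 0) (at x)" if "x > 0" for x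
  proof -
    have "((\<lambda>u. integral {0..u} (\<lambda>s. s * max (\<kappa> s) 0)) has_vector_derivative x * max (\<kappa> x) 0)
       (at x within {0..x+1})"
      using integral_has_vector_derivative[OF gc, of x "x+1"] that by simp
    then have "(mu_plus \<kappa> has_real_derivative x * max (\<kappa> x) 0) (at x within {0..x+1})"
      unfolding mu_plus_def[abs_def] has_real_derivative_iff_has_vector_derivative .
    then show ?thesis by (rule within_to_at) (use that in simp)
  qed
  show c: "continuous_on {0..b} (mu_plus \<kappa>)" for b
    unfolding mu_plus_def[abs_def]
    by (rule indefinite_integral_continuous_1[OF integrable_continuous_real[OF gc]])
  show "mu_plus \<kappa> x \<le> mu_plus \<kappa> y" if "0 \<le> x" "x \<le> y" for x y
    by (rule mono_deriv[OF that(2) continuous_on_subset[OF c[of y]], of "\<lambda>x. x * max (\<kappa> x) 0"])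
       (use that in \<open>simp_all add: d\<close>)
qed

lemma pos_interior: "(x::real) > 0 \<Longrightarrow> x \<in> interior {0..}"
  using interior_Ici[of "-1" "0::real"] by simp

lemma f_pos:
  fixes \<kappa> f fd :: "real \<Rightarrow> real"
  assumes kc: "continuous_on {0..} \<kappa>"
    and fD: "\<And>x. x \<ge> 0 \<Longrightarrow> (f has_real_derivative fd x) (at x within {0..})"
    and fdD: "\<And>x. x \<ge> 0 \<Longrightarrow> (fd has_real_derivative (- \<kappa> x * f x)) (at x within {0..})"
    and f0: "f 0 = 0" and fd0: "fd 0 = 1"
    and mu: "mu_plus \<kappa> L \<le> 1"
    and x1: "0 < x1" "x1 \<le> L"
  shows "f x1 > 0"
proof (rule ccontr)
  assume "\<not> f x1 > 0"
  hence fx1: "f x1 \<le> 0" by simp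
  have fc: "continuous_on {0..} f" by (rule deriv_cont_on[of _ f fd]) (use fD in auto)
  have fdc: "continuous_on {0..} fd" by (rule deriv_cont_on[of _ fd "\<lambda>x. - \<kappa> x * f x"]) (use fdD in auto)
  have fat: "(f has_real_derivative fd x) (at x)" if "x > 0" for x
    using within_to_at[OF fD pos_interior[OF that]] that by simp
  have fdat: "(fd has_real_derivative (- \<kappa> x * f x)) (at x)" if "x > 0" for x
    using within_to_at[OF fdD pos_interior[OF that]] that by simp
  obtain d where d: "d > 0" and dpos: "\<And>h. h > 0 \<Longrightarrow> h < d \<Longrightarrow> f h > 0"
    using has_real_derivative_pos_inc_right[OF fD[of 0]] fd0 f0 by force
  have dx1: "d \<le> x1" using dpos[of x1] fx1 x1 by force
  define a where "a = d / 2"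
  have a: "0 < a" "a < d" using d by (auto simp: a_def)
  define S where "S = {a..x1} \<inter> f -` {..0}"
  have "closed S" unfolding S_def
    by (rule continuous_closed_preimage[OF continuous_on_subset[OF fc]]) (use a in auto)
  moreover have "x1 \<in> S" using fx1 dx1 a by (auto simp: S_def)
  moreover have bS: "bdd_below S" unfolding S_def by (rule bdd_belowI[of _ a]) auto
  ultimately have zS: "Inf S \<in> S" using closed_contains_Inf by blast
  define z where "z = Inf S"
  have z: "a \<le> z" "z \<le> x1" "f z \<le> 0" using zS by (auto simp: S_def z_def)
  have fpos: "f x > 0" if "0 < x" "x < z" for x
  proof (cases "x < d")
    case True then show ?thesis using dpos that by simp
  next
    case False
    show ?thesis
    proof (rule ccontr)
      assume "\<not> f x > 0"
      then have "x \<in> S" using False a that z by (auto simp: S_def)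
      then have "z \<le> x" unfolding z_def by (rule cInf_lower[OF _ bS])
      then show False using that by simp
    qed
  qed
  have az: "a < z"
  proof (rule ccontr)
    assume "\<not> a < z" then have "z = a" using z(1) by simp
    then show False using dpos[of a] a z(3) by simp
  qed
  obtain t where t: "t \<in> {0..z}" and tmax: "\<And>y. y \<in> {0..z} \<Longrightarrow> f y \<le> f t"
    using continuous_attains_sup[of "{0..z}" f] continuous_on_subset[OF fc, of "{0..z}"] az a by fastforce
  have fa: "f a > 0" using fpos a az by simp
  have ft: "f t > 0" using tmax[of a] fa a az by simp
  have t0: "0 < t" using ft f0 t by (cases "t = 0") auto
  have tz: "t < z" using ft z t by (cases "t = z") auto
  have fdt: "fd t = 0"
  proof (rule DERIV_local_max[OF fat[OF t0], of "min t (z - t)"])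
    show "0 < min t (z - t)" using t0 tz by simp
    show "\<forall>y. \<bar>t - y\<bar> < min t (z - t) \<longrightarrow> f y \<le> f t"
      using tmax by (auto simp: abs_if split: if_splits)
  qed
  note muf = mu_facts[OF kc]
  define D where "D = (\<lambda>x. f t * mu_plus \<kappa> x + x * fd x - f x)"
  have "D 0 \<le> D t"
  proof (rule mono_deriv[of 0 t D "\<lambda>x. f t * (x * max (\<kappa> x) 0) + (1 * fd x + (- \<kappa> x * f x) * x) - fd x"])
    show "0 \<le> t" using t0 by simp
    show "continuous_on {0..t} D" unfolding D_def
      by (intro continuous_intros muf(3) continuous_on_subset[OF fc] continuous_on_subset[OF fdc]) auto
    fix x assume x: "0 < x" "x < t"
    show "(D has_real_derivative f t * (x * max (\<kappa> x) 0) + (1 * fd x + (- \<kappa> x * f x) * x) - fd x) (at x)"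
      unfolding D_def
      by (rule DERIV_diff[OF DERIV_add[OF DERIV_cmult[OF muf(2)[OF x(1)]] DERIV_mult[OF DERIV_ident fdat[OF x(1)]]] fat[OF x(1)]])
    have fx: "0 < f x" "f x \<le> f t" using fpos[of x] tmax[of x] x tz by auto
    have "\<kappa> x * f x \<le> max (\<kappa> x) 0 * f x" using fx by (intro mult_right_mono) auto
    also have "\<dots> \<le> max (\<kappa> x) 0 * f t" using fx by (intro mult_left_mono) auto
    finally have "x * (\<kappa> x * f x) \<le> x * (max (\<kappa> x) 0 * f t)" using x by (intro mult_left_mono) auto
    moreover have "f t * (x * max (\<kappa> x) 0) + (1 * fd x + (- \<kappa> x * f x) * x) - fd x
       = x * (max (\<kappa> x) 0 * f t) - x * (\<kappa> x * f x)" by (simp add: algebra_simps)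
    ultimately show "0 \<le> f t * (x * max (\<kappa> x) 0) + (1 * fd x + (- \<kappa> x * f x) * x) - fd x"
      by linarith
  qed
  then have "0 \<le> f t * mu_plus \<kappa> t - f t" using muf(1) fdt f0 by (simp add: D_def)
  then have "f t * 1 \<le> f t * mu_plus \<kappa> t" by simp
  then have mut: "1 \<le> mu_plus \<kappa> t" using ft by simp
  have muz: "mu_plus \<kappa> z \<le> 1" using muf(4)[of z L] z x1 a mu by simp
  have mueq: "mu_plus \<kappa> y = mu_plus \<kappa> t" if "t \<le> y" "y \<le> z" for y
    using muf(4)[of t y] muf(4)[of y z] that t0 mut muz by simp
  have kneg: "\<kappa> x \<le> 0" if "t < x" "x < z" for x
  proof -
    have "x * max (\<kappa> x) 0 = 0"
    proof (rule DERIV_local_const[OF muf(2)[of x], of "min (x - t) (z - x)"])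
      show "0 < x" using that t0 by simp
      show "0 < min (x - t) (z - x)" using that by simp
      show "\<forall>y. \<bar>x - y\<bar> < min (x - t) (z - x) \<longrightarrow> mu_plus \<kappa> x = mu_plus \<kappa> y"
      proof (intro allI impI)
        fix y assume "\<bar>x - y\<bar> < min (x - t) (z - x)"
        then have "t \<le> y" "y \<le> z" by (auto simp: abs_if split: if_splits)
        then show "mu_plus \<kappa> x = mu_plus \<kappa> y" using mueq[of x] mueq[of y] that by simp
      qed
    qed
    then show ?thesis using that t0 by simp
  qed
  have fdge: "fd x \<ge> 0" if "t < x" "x < z" for x
  proof -
    have "fd t \<le> fd x"
    proof (rule mono_deriv[of t x fd "\<lambda>x. - \<kappa> x * f x"])
      show "t \<le> x" using that by simp
      show "continuous_on {t..x} fd" by (rule continuous_on_subset[OF fdc]) (use t0 in auto)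
      fix y assume y: "t < y" "y < x"
      show "(fd has_real_derivative - \<kappa> y * f y) (at y)" using fdat[of y] y t0 by simp
      have "\<kappa> y \<le> 0" "f y > 0" using kneg[of y] fpos[of y] y that t0 by auto
      then show "0 \<le> - \<kappa> y * f y" by (simp add: mult_nonpos_nonneg)
    qed
    then show ?thesis using fdt by simp
  qed
  have "f t \<le> f z"
  proof (rule mono_deriv[of t z f fd])
    show "t \<le> z" using tz by simp
    show "continuous_on {t..z} f" by (rule continuous_on_subset[OF fc]) (use t0 in auto)
    fix y assume y: "t < y" "y < z"
    show "(f has_real_derivative fd y) (at y)" using fat[of y] y t0 by simp
    show "0 \<le> fd y" using fdge y by simp
  qed
  then show False using ft z by simp
qed

theorem proposition4p3:
  fixes n :: nat and \<kappa> f fd \<phi> h r rd rdd :: "real \<Rightarrow> real" and lam :: real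
  assumes n2: "n \<ge> 2"
    and \<kappa>_cont: "continuous_on {0..} \<kappa>"
    and f_deriv: "\<And>x. x \<ge> 0 \<Longrightarrow> (f has_real_derivative fd x) (at x within {0..})"
    and fd_deriv: "\<And>x. x \<ge> 0 \<Longrightarrow> (fd has_real_derivative (- \<kappa> x * f x)) (at x within {0..})"
    and f0: "f 0 = 0" and fd0: "fd 0 = 1"
    and lam_pos: "lam > 0"
    and mu: "mu_plus \<kappa> (max lam 1) \<le> 1"
    (* (A1) *)
    and A1_C2: "C2_on {0<..} h"
    and A1_conv: "strictly_convex_on {0<..} h"
    (* (A2) *)
    and A2_0: "filterlim h at_top (at_right 0)"
    and A2_inf: "filterlim (\<lambda>v. h v / v) at_top at_top"
    (* (A4) *)
    and A4_pos: "\<And>v. v > 0 \<Longrightarrow> \<phi> v > 0"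
    and A4_C2: "C2_on {0<..} \<phi>"
    and A4_conv: "convex_on {0<..} \<phi>"
    (* (A5) *)
    and A5: "strict_mono_on {0<..} (\<lambda>v. v * deriv \<phi> v)"
    (* (A6) *)
    and A6: "\<exists>t0 \<ge> 0.
       ((t0 > 0 \<and> deriv \<phi> t0 = 0) \<or> (t0 = 0 \<and> (deriv \<phi> \<longlongrightarrow> 0) (at_right 0))) \<and>
       (\<forall>s \<ge> 1. bdd_above {deriv \<phi> v / deriv \<phi> (s * v) | v. v > t0}) \<and>
       (\<forall>s. 0 < s \<and> s \<le> 1 \<longrightarrow> bdd_below {deriv \<phi> v / deriv \<phi> (s * v) | v. v > t0 / s}) \<and>
       (let q1 = (\<lambda>s. Sup {deriv \<phi> v / deriv \<phi> (s * v) | v. v > t0});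
            q0 = (\<lambda>s. Inf {deriv \<phi> v / deriv \<phi> (s * v) | v. v > t0 / s}) in
        (\<exists>q1'. continuous_on {1..} q1' \<and>
           (\<forall>s \<ge> 1. (q1 has_real_derivative q1' s) (at s within {1..}) \<and> q1' s < 0)) \<and>
        (\<exists>q0'. continuous_on {0<..1} q0' \<and>
           (\<forall>s. 0 < s \<and> s \<le> 1 \<longrightarrow> (q0 has_real_derivative q0' s) (at s within {0<..1}) \<and> q0' s < 0)) \<and>
        (q1 \<longlongrightarrow> 0) at_top \<and> filterlim q0 at_top (at_right 0))"
    (* (A7) *)
    and A7: "\<exists>\<delta>0>0. \<exists>\<delta>1>0. \<forall>s v. v > 0 \<and> \<bar>s - 1\<bar> < \<delta>0 \<longrightarrow>
               \<bar>deriv \<phi> (s * v)\<bar> \<le> \<delta>1 * \<phi> v / v"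
    (* (A8) with beta = 0 *)
    and A8: "\<exists>\<delta>2>0. \<exists>\<alpha>. 0 < \<alpha> \<and> \<alpha> < real n \<and>
               (\<forall>v>0. \<phi> v \<le> \<delta>2 * (1 + v powr \<alpha> + v powr 0))"
    (* r is an equilibrium solution with r(1) = lambda *)
    and r_C1: "\<And>\<rho>. \<rho> \<in> {0<..1} \<Longrightarrow> (r has_real_derivative rd \<rho>) (at \<rho> within {0<..1})"
    and rd_cont: "continuous_on {0<..1} rd"
    and rd_deriv: "\<And>\<rho>. \<rho> \<in> {0<..<1} \<Longrightarrow> (rd has_real_derivative rdd \<rho>) (at \<rho>)"
    and rd_pos: "\<And>\<rho>. \<rho> \<in> {0<..1} \<Longrightarrow> rd \<rho> > 0"
    and r0_lim: "\<exists>r0 \<ge> 0. (r \<longlongrightarrow> r0) (at_right 0)"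
    and r1: "r 1 = lam"
    and ode: "\<And>\<rho>. \<rho> \<in> {0<..<1} \<Longrightarrow>
       f \<rho> * (deriv (deriv \<phi>) (rd \<rho>)
          + deriv (deriv h) (rd \<rho> * tau f r \<rho> ^ (n - 1)) * tau f r \<rho> ^ (2 * (n - 1))) * rdd \<rho>
       = real (n - 1) * (fd (r \<rho>) * deriv \<phi> (tau f r \<rho>) - fd \<rho> * deriv \<phi> (rd \<rho>))
         - real (n - 1) * (fd (r \<rho>) * rd \<rho> - fd \<rho> * tau f r \<rho>)
             * deriv (deriv h) (rd \<rho> * tau f r \<rho> ^ (n - 1)) * rd \<rho> * tau f r \<rho> ^ (2 * n - 3)"
    (* cavitating *)
    and cav_r0: "\<exists>r0 > 0. (r \<longlongrightarrow> r0) (at_right 0)"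
    and cav_T: "(cauchy_T n \<phi> h f r rd \<longlongrightarrow> 0) (at_right 0)"
  shows "(\<exists>w > 0. deriv h w = 0) \<and>
         (\<forall>w. w > 0 \<and> deriv h w = 0 \<longrightarrow>
            ((\<lambda>\<rho>. rd \<rho> * tau f r \<rho> ^ (n - 1)) \<longlongrightarrow> w) (at_right 0))"
proof -
  obtain r0 where r0: "r0 > 0" "(r \<longlongrightarrow> r0) (at_right 0)" using cav_r0 by blast
  define L where "L = max lam 1"
  have fpos: "f x > 0" if "0 < x" "x \<le> L" for x
    by (rule f_pos[OF \<kappa>_cont f_deriv fd_deriv f0 fd0 mu[folded L_def] that])
  have hdiff: "h differentiable (at x)" if "x > 0" for x using A1_C2 that by (simp add: C2_on_def)
  have hddiff: "deriv h differentiable (at x)" if "x > 0" for x using A1_C2 that by (simp add: C2_on_def)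
  have hconv: "convex_on {0<..} h" by (rule strict_to_convex[OF A1_conv])
  have hmono: "deriv h x < deriv h y" if "0 < x" "x < y" for x y
    using strict_deriv_mono[OF A1_conv that hdiff hdiff] that by simp
  have hmono': "x < y" if "0 < x" "0 < y" "deriv h x < deriv h y" for x y
  proof (rule ccontr)
    assume "\<not> x < y"
    then have "y < x \<or> y = x" by auto
    then show False using hmono[of y x] that by auto
  qed
  have part1: "\<exists>w > 0. deriv h w = 0"
  proof -
    have ev1: "eventually (\<lambda>x. h 1 + 1 \<le> h x) (at_right 0)"
      using A2_0 unfolding filterlim_at_top by blast
    have ev2: "eventually (\<lambda>x. 0 < x \<and> x < (1::real)) (at_right 0)"
      by (rule eventually_at_rightI[of 0 1]) auto
    obtain x where x: "h 1 + 1 \<le> h x" "0 < x" "x < 1"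
      using eventually_happens'[OF _ eventually_conj[OF ev1 ev2]] by auto
    have "h 1 - h x \<ge> deriv h x * (1 - x)" using tangent0[OF hconv x(2) _ hdiff[OF x(2)], of 1] by simp
    then have "deriv h x * (1 - x) < 0" using x by linarith
    then have dx: "deriv h x < 0" using x by (simp add: mult_less_0_iff)
    have ev3: "eventually (\<lambda>y. \<bar>h 1\<bar> + 1 \<le> h y / y) at_top"
      using A2_inf unfolding filterlim_at_top by blast
    obtain y where y: "\<bar>h 1\<bar> + 1 \<le> h y / y" "1 < y"
      using eventually_happens'[OF _ eventually_conj[OF ev3 eventually_gt_at_top[of 1]]] by auto
    have "(\<bar>h 1\<bar> + 1) * y \<le> h y" using y by (simp add: pos_le_divide_eq)
    moreover have "(\<bar>h 1\<bar> + 1) * 1 < (\<bar>h 1\<bar> + 1) * y" using y by (intro mult_strict_left_mono) auto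
    moreover have "h 1 < (\<bar>h 1\<bar> + 1) * 1" by simp
    ultimately have hy: "h 1 < h y" by (meson less_le_trans less_trans)
    have "h 1 - h y \<ge> deriv h y * (1 - y)" using tangent0[OF hconv _ _ hdiff, of y 1] y by simp
    then have "deriv h y * (y - 1) > 0" using hy by (simp add: algebra_simps)
    then have dy: "deriv h y > 0" using y by (simp add: zero_less_mult_iff)
    have "continuous_on {x..y} (deriv h)"
    proof (rule continuous_at_imp_continuous_on, intro ballI)
      fix u assume "u \<in> {x..y}"
      then have "u > 0" using x by simp
      then show "isCont (deriv h) u"
        using hddiff[of u] DERIV_deriv_iff_real_differentiable DERIV_isCont by blast
    qed
    then obtain w where "x \<le> w" "w \<le> y" "deriv h w = 0"
      using IVT'[of "deriv h" x 0 y] dx dy x y by auto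
    then show ?thesis using x by (intro exI[of _ w]) auto
  qed
  have pdiff: "\<phi> differentiable (at x)" if "x > 0" for x using A4_C2 that by (simp add: C2_on_def)
  have pnn: "deriv \<phi> x \<ge> 0" if "x > 0" for x
    by (rule phi_deriv_nonneg[OF A4_pos pdiff A4_conv A5 A8 that])
  have pup: "deriv \<phi> x \<le> 2 * \<phi> 1" if "0 < x" "x \<le> 1/2" for x
    by (rule phi_deriv_upper[OF A4_pos pdiff A4_conv that])
  have rat: "(r has_real_derivative rd x) (at x)" if "0 < x" "x < 1" for x
  proof -
    have "(r has_real_derivative rd x) (at x within {0<..<1})"
      by (rule has_field_derivative_subset[OF r_C1[of x]]) (use that in auto)
    then show ?thesis using at_within_open[of x "{0<..<1}"] that by simp
  qed
  have rc: "continuous_on {0<..1} r" by (rule deriv_cont_on[OF r_C1])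
  have rle: "r \<rho> \<le> lam" if "0 < \<rho>" "\<rho> < 1" for \<rho>
  proof -
    have "r \<rho> \<le> r 1"
    proof (rule mono_deriv[of \<rho> 1 r rd])
      show "\<rho> \<le> 1" using that by simp
      show "continuous_on {\<rho>..1} r" by (rule continuous_on_subset[OF rc]) (use that in auto)
      fix x assume x: "\<rho> < x" "x < 1"
      show "(r has_real_derivative rd x) (at x)" using rat x that by auto
      show "0 \<le> rd x" using rd_pos[of x] x that by auto
    qed
    then show ?thesis using r1 by simp
  qed
  have ev01: "eventually (\<lambda>\<rho>. 0 < \<rho> \<and> \<rho> < (1::real)) (at_right 0)"
    by (rule eventually_at_rightI[of 0 1]) auto
  have r0lam: "r0 \<le> lam"
    by (rule tendsto_upperbound[OF r0(2)]) (use ev01 rle in \<open>auto elim: eventually_mono\<close>)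
  have fr0: "f r0 > 0" using fpos[of r0] r0 r0lam by (simp add: L_def)
  have "isCont f r0"
    using DERIV_isCont[OF within_to_at[OF f_deriv pos_interior]] r0 by auto
  then have lim1: "((\<lambda>\<rho>. f (r \<rho>)) \<longlongrightarrow> f r0) (at_right 0)"
    by (rule isCont_tendsto_compose[OF _ r0(2)])
  have "(f \<longlongrightarrow> f 0) (at 0 within {0..})"
    using DERIV_continuous[OF f_deriv[of 0]] by (simp add: continuous_within)
  then have "(f \<longlongrightarrow> f 0) (at_right 0)"
    by (rule tendsto_within_subset) auto
  then have lim2: "(f \<longlongrightarrow> 0) (at_right 0)" using f0 by simp
  have evf: "eventually (\<lambda>\<rho>. 0 < f \<rho>) (at_right 0)"
    using ev01 by eventually_elim (use fpos in \<open>auto simp: L_def\<close>)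
  have taulim: "filterlim (tau f r) at_top (at_right 0)"
    unfolding tau_def[abs_def] by (rule LIM_at_top_divide[OF lim1 fr0 lim2 evf])
  have n1: "0 < n - 1" using n2 by simp
  define P where "P = (\<lambda>\<rho>. tau f r \<rho> ^ (n - 1))"
  have Plim: "filterlim P at_top (at_right 0)"
    unfolding P_def by (rule filterlim_pow_at_top[OF n1 taulim])
  have Qlim: "filterlim (\<lambda>\<rho>. P \<rho> * P \<rho>) at_infinity (at_right 0)"
  proof -
    have "filterlim (\<lambda>\<rho>. P \<rho> ^ 2) at_top (at_right 0)" by (rule filterlim_pow_at_top[OF _ Plim]) simp
    then show ?thesis by (intro filterlim_at_top_imp_at_infinity) (simp add: power2_eq_square)
  qed
  have TQ: "((\<lambda>\<rho>. cauchy_T n \<phi> h f r rd \<rho> / (P \<rho> * P \<rho>)) \<longlongrightarrow> 0) (at_right 0)"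
    by (rule tendsto_divide_0[OF cav_T Qlim])
  have Pinf: "filterlim P at_infinity (at_right 0)" by (rule filterlim_at_top_imp_at_infinity[OF Plim])
  have Ppos: "eventually (\<lambda>\<rho>. 0 < P \<rho>) (at_right 0)"
    by (rule eventually_compose_filterlim[OF eventually_gt_at_top Plim])
  define v where "v = (\<lambda>\<rho>. rd \<rho> * P \<rho>)"
  have ident: "cauchy_T n \<phi> h f r rd \<rho> / (P \<rho> * P \<rho>) = deriv \<phi> (rd \<rho>) / P \<rho> + deriv h (v \<rho>)"
    if "P \<rho> > 0" for \<rho>
  proof -
    have "cauchy_T n \<phi> h f r rd \<rho> = P \<rho> * (deriv \<phi> (rd \<rho>) + deriv h (v \<rho>) * P \<rho>)"
      unfolding cauchy_T_def P_def v_def by (rule refl)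
    then show ?thesis using that by (simp add: field_simps)
  qed
  have upper: "eventually (\<lambda>\<rho>. v \<rho> < a) (at_right 0)" if w: "w > 0" "deriv h w = 0" and a: "w < a" for w a
  proof -
    have ha: "deriv h a > 0" using hmono[OF w(1) a] w by simp
    have "eventually (\<lambda>\<rho>. cauchy_T n \<phi> h f r rd \<rho> / (P \<rho> * P \<rho>) < deriv h a) (at_right 0)"
      by (rule order_tendstoD(2)[OF TQ ha])
    then show ?thesis using Ppos ev01
    proof eventually_elim
      case (elim \<rho>)
      have vpos: "v \<rho> > 0" using elim rd_pos[of \<rho>] by (simp add: v_def)
      have "deriv \<phi> (rd \<rho>) / P \<rho> \<ge> 0" using pnn[of "rd \<rho>"] rd_pos[of \<rho>] elim by simp
      then have "deriv h (v \<rho>) < deriv h a" using elim ident[of \<rho>] by simp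
      then show ?case using hmono' vpos w a by simp
    qed
  qed
  show ?thesis
  proof (intro conjI part1 allI impI)
    fix w assume w: "0 < w \<and> deriv h w = 0"
    have "(v \<longlongrightarrow> w) (at_right 0)"
    proof (rule order_tendstoI)
      fix a assume aw: "a < w"
      show "eventually (\<lambda>\<rho>. a < v \<rho>) (at_right 0)"
      proof (cases "a \<le> 0")
        case True
        show ?thesis using Ppos ev01
        proof eventually_elim
          case (elim \<rho>)
          then have "0 < rd \<rho> * P \<rho>" using rd_pos[of \<rho>] by simp
          then show ?case using True by (simp add: v_def)
        qed
      next
        case False
        then have a0: "0 < a" by simp
        have ha: "deriv h a < 0" using hmono[OF a0 aw] w by simp
        define K where "K = 2 * \<phi> 1"
        have e1: "eventually (\<lambda>\<rho>. deriv h a / 2 < cauchy_T n \<phi> h f r rd \<rho> / (P \<rho> * P \<rho>)) (at_right 0)"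
          by (rule order_tendstoD(1)[OF TQ]) (use ha in simp)
        have e2: "eventually (\<lambda>\<rho>. K / P \<rho> < - deriv h a / 2) (at_right 0)"
          by (rule order_tendstoD(2)[OF tendsto_divide_0[OF tendsto_const Pinf]]) (use ha in simp)
        have e3: "eventually (\<lambda>\<rho>. (w + 1) / P \<rho> < 1/2) (at_right 0)"
          by (rule order_tendstoD(2)[OF tendsto_divide_0[OF tendsto_const Pinf]]) simp
        have e4: "eventually (\<lambda>\<rho>. v \<rho> < w + 1) (at_right 0)" using upper[of w "w+1"] w by simp
        show ?thesis using e1 e2 e3 e4 Ppos ev01
        proof eventually_elim
          case (elim \<rho>)
          have rdp: "rd \<rho> > 0" using rd_pos elim by simp
          have vpos: "v \<rho> > 0" using elim rdp by (simp add: v_def)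
          have "rd \<rho> = v \<rho> / P \<rho>" using elim by (simp add: v_def)
          also have "\<dots> \<le> (w + 1) / P \<rho>" using elim by (intro divide_right_mono) auto
          finally have "rd \<rho> \<le> (w + 1) / P \<rho>" .
          then have "rd \<rho> \<le> 1/2" using elim(3) by linarith
          then have "deriv \<phi> (rd \<rho>) \<le> K" using pup rdp by (simp add: K_def)
          then have "deriv \<phi> (rd \<rho>) / P \<rho> \<le> K / P \<rho>" using elim by (intro divide_right_mono) auto
          then have "deriv h a < deriv h (v \<rho>)" using elim ident[of \<rho>] by simp
          then show ?case using hmono' vpos a0 by simp
        qed
      qed
    next
      fix a assume "w < a"
      then show "eventually (\<lambda>\<rho>. v \<rho> < a) (at_right 0)" using upper w by blast
    qed
    then show "((\<lambda>\<rho>. rd \<rho> * tau f r \<rho> ^ (n - 1)) \<longlongrightarrow> w) (at_right 0)"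
      by (simp add: v_def P_def)
  qed
qed

end
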